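(* Let $\mathcal{I}$ be an ideal on $\omega$. If $\mathcal{ED}\le_{\mathrm{K}}\mathcal{I}$, then Player II has a winning strategy in the tallness* game with respect to $\mathcal{I}$.
   Context: Ideals on $\omega$ are assumed to contain all finite sets; $\mathcal{I}^+=\mathcal{P}(\omega)\setminus\mathcal{I}$. $\mathcal{ED}$ is the ideal on $\omega\times\omega$ generated by the vertical lines $\{n\}\times\omega$ and the graphs of functions from $\omega$ to $\omega$. For ideals $\mathcal{J}$ on $X$ and $\mathcal{I}$ on $Y$, $\mathcal{J}\le_{\mathrm{K}}\mathcal{I}$ (Katětov order) means there is a function $f:Y\to X$ with $f^{-1}(J)\in\mathcal{I}$ for every $J\in\mathcal{J}$. Tallness* game with respect to $\mathcal{I}$: at round $k$, Player I plays $n_k\in\omega$ with $n_0<n_1<\cdots$, then Player II plays $i_k\in\{0,1\}$. Player II wins iff either $\{n_k:k\in\omega\}\in\mathcal{I}$, or ($\{n_k:k\in\omega\}\in\mathcal{I}^+$ and $\{n_k:i_k=1\}$ is infinite and belongs to $\mathcal{I}$). *)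

theory Defs
  imports Main
begin

definition is_ideal :: "'a set set \<Rightarrow> bool" where
  "is_ideal I \<longleftrightarrow>
     (\<forall>A. finite A \<longrightarrow> A \<in> I) \<and>
     (\<forall>A B. A \<in> I \<longrightarrow> B \<subseteq> A \<longrightarrow> B \<in> I) \<and>
     (\<forall>A B. A \<in> I \<longrightarrow> B \<in> I \<longrightarrow> A \<union> B \<in> I) \<and>
     UNIV \<notin> I"

definition ED :: "(nat \<times> nat) set set" where
  "ED = {A. \<exists>N F. finite N \<and> finite F \<and>
            A \<subseteq> (\<Union>n\<in>N. {n} \<times> UNIV) \<union> (\<Union>f\<in>F. {(m, f m) | m. True})}"

definition katetov_le :: "'x set set \<Rightarrow> 'y set set \<Rightarrow> bool" where
  "katetov_le J I \<longleftrightarrow> (\<exists>f :: 'y \<Rightarrow> 'x. \<forall>A\<in>J. f -` A \<in> I)"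

(* Player I plays a strictly increasing sequence n_0 < n_1 < ...;
   Player II answers i_k \<in> {0,1}, encoded as a bool (True = 1).
   A strategy of Player II maps the list [n_0,...,n_k] of Player I's moves so far
   to the answer i_k (II's own earlier moves are determined by the strategy). *)
definition tallness_star_II_wins :: "nat set set \<Rightarrow> (nat \<Rightarrow> nat) \<Rightarrow> (nat \<Rightarrow> bool) \<Rightarrow> bool" where
  "tallness_star_II_wins I n i \<longleftrightarrow>
     range n \<in> I \<or>
     (range n \<notin> I \<and> infinite {n k | k. i k} \<and> {n k | k. i k} \<in> I)"

definition II_winning_strategy_tallness_star :: "nat set set \<Rightarrow> (nat list \<Rightarrow> bool) \<Rightarrow> bool" where
  "II_winning_strategy_tallness_star I \<sigma> \<longleftrightarrow>
     (\<forall>n :: nat \<Rightarrow> nat. strict_mono n \<longrightarrow>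
        tallness_star_II_wins I n (\<lambda>k. \<sigma> (map n [0..<Suc k])))"

end

theory Submission
  imports Defs
begin

theorem mainTheorem16:
  fixes I :: "nat set set"
  assumes "is_ideal I"
    and "katetov_le ED I"
  shows "\<exists>\<sigma>. II_winning_strategy_tallness_star I \<sigma>"
proof -
  obtain f :: "nat \<Rightarrow> nat \<times> nat" where f: "\<forall>A\<in>ED. f -` A \<in> I"
    using assms(2) unfolding katetov_le_def by blast
  have down: "\<And>A B. A \<in> I \<Longrightarrow> B \<subseteq> A \<Longrightarrow> B \<in> I"
    using assms(1) unfolding is_ideal_def by blast
  define a where "a = (\<lambda>m. fst (f m))"
  define \<sigma> where "\<sigma> = (\<lambda>xs. a (last xs) \<notin> a ` set (butlast xs))"
  have "II_winning_strategy_tallness_star I \<sigma>"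
    unfolding II_winning_strategy_tallness_star_def
  proof (intro allI impI)
    fix n :: "nat \<Rightarrow> nat"
    assume "strict_mono n"
    define i where "i = (\<lambda>k. \<sigma> (map n [0..<Suc k]))"
    have i: "i k \<longleftrightarrow> a (n k) \<notin> (\<lambda>j. a (n j)) ` {..<k}" for k
      unfolding i_def \<sigma>_def by (simp add: lessThan_atLeast0 image_image)
    define S where "S = {n k | k. i k}"
    define g where "g = (\<lambda>m. snd (f (n (LEAST k. a (n k) = m))))"
    have least: "i (LEAST k'. a (n k') = a (n k))" for k
    proof -
      define K where "K = (LEAST k'. a (n k') = a (n k))"
      have e: "a (n K) = a (n k)" unfolding K_def by (rule LeastI) simp
      have lt: "\<And>j. j < K \<Longrightarrow> a (n j) \<noteq> a (n k)" unfolding K_def by (rule not_less_Least)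
      have "a (n K) \<notin> (\<lambda>j. a (n j)) ` {..<K}"
      proof
        assume "a (n K) \<in> (\<lambda>j. a (n j)) ` {..<K}"
        then obtain j where "j < K" "a (n K) = a (n j)" by blast
        thus False using lt e by metis
      qed
      then show ?thesis using i[of K] unfolding K_def by blast
    qed
    have SI: "S \<in> I"
    proof -
      let ?G = "{(m, g m) | m. True}"
      have "?G \<in> ED" unfolding ED_def
        by (rule CollectI, rule exI[of _ "{}"], rule exI[of _ "{g}"]) blast
      hence "f -` ?G \<in> I" using f by blast
      moreover have "S \<subseteq> f -` ?G"
      proof
        fix x assume "x \<in> S"
        then obtain k where x: "x = n k" "i k" unfolding S_def by blast
        have "(LEAST k'. a (n k') = a (n k)) = k"
        proof (rule Least_equality)
          show "\<And>y. a (n y) = a (n k) \<Longrightarrow> k \<le> y"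
          proof -
            fix y assume y: "a (n y) = a (n k)"
            show "k \<le> y"
            proof (rule ccontr)
              assume "\<not> k \<le> y"
              hence "y \<in> {..<k}" by simp
              hence "a (n k) \<in> (\<lambda>j. a (n j)) ` {..<k}" using y by (metis image_eqI)
              thus False using x(2) i[of k] by blast
            qed
          qed
        qed simp
        hence "g (a (n k)) = snd (f (n k))" unfolding g_def by simp
        hence "f x = (a (n k), g (a (n k)))" using x unfolding a_def by simp
        thus "x \<in> f -` ?G" by auto
      qed
      ultimately show ?thesis using down by blast
    qed
    have inf: "infinite S" if nI: "range n \<notin> I"
    proof
      assume fin: "finite S"
      have sub: "a ` range n \<subseteq> a ` S"
      proof
        fix c assume "c \<in> a ` range n"
        then obtain k where c: "c = a (n k)" by auto
        let ?k = "LEAST k'. a (n k') = a (n k)"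
        have e: "a (n ?k) = a (n k)" by (rule LeastI) simp
        have "n ?k \<in> S" unfolding S_def using least[of k] by blast
        thus "c \<in> a ` S" using e c by (metis image_eqI)
      qed
      let ?C = "(\<Union>c\<in>a ` S. {c} \<times> (UNIV::nat set))"
      have "?C \<in> ED" unfolding ED_def
        by (rule CollectI, rule exI[of _ "a ` S"], rule exI[of _ "{}"]) (use fin in blast)
      hence "f -` ?C \<in> I" using f by blast
      moreover have "range n \<subseteq> f -` ?C"
      proof
        fix x assume "x \<in> range n"
        hence "a x \<in> a ` S" using sub by blast
        then obtain s where "s \<in> S" "a x = a s" by blast
        hence "f x \<in> ?C" unfolding a_def by (cases "f x") auto
        thus "x \<in> f -` ?C" by simp
      qed
      ultimately show False using down nI by blast
    qed
    show "tallness_star_II_wins I n (\<lambda>k. \<sigma> (map n [0..<Suc k]))"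
    proof (cases "range n \<in> I")
      case True thus ?thesis unfolding tallness_star_II_wins_def by blast
    next
      case False
      have "infinite S" using inf False .
      moreover have "S = {n k | k. \<sigma> (map n [0..<Suc k])}" unfolding S_def i_def ..
      ultimately show ?thesis using SI False unfolding tallness_star_II_wins_def by simp
    qed
  qed
  thus ?thesis by blast
qed

end
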